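(* In any execution of the Weakener algorithm (described in the context), for every round $j \ge 0$: if no process reaches the step "write $\textsc{true}$ into $R_2[j]$" in round $j$, then neither $p_0$ nor $p_1$ enters round $j+1$.
   Context: Weakener algorithm for $n \ge 3$ processes $p_0,\dots,p_{n-1}$ in an asynchronous shared-memory system. Shared registers, for each $j = 0,1,2,\dots$: $R_1[j]$, a multi-writer multi-reader register initialized to $\bot$; $C_1[j]$, a register written only by $p_0$, initialized to $-1$; $R_2[j]$, a register initialized to $\textsc{false}$. Code of $p_i$ for $i \in \{0,1\}$: for rounds $j=0,1,2,\dots$: (Phase 1) write $i$ into $R_1[j]$; if $i=0$, flip a fair coin (outcome in $\{0,1\}$) and write the outcome into $C_1[j]$; (Phase 2) read $R_2[j]$ into local variable $v_1$; if $v_1 = \textsc{false}$, exit the for loop. After the loop: return. Code of $p_i$ for $i \in \{2,\dots,n-1\}$: for rounds $j=0,1,2,\dots$: (Phase 1) read $R_1[j]$ into $u_1$; read $R_1[j]$ into $u_2$; read $C_1[j]$ into $c_1$; if $u_1 \ne c_1$ or $u_2 \ne 1-c_1$, exit the for loop; (Phase 2) write $\textsc{true}$ into $R_2[j]$. After the loop: return. Registers behave according to their (linearizable) sequential specification: a read returns the initial value or a value written to that register. *)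

theory Defs
  imports Main
begin

text \<open>Program locations of a process. A location records the next atomic
  step to be executed together with the local variables it needs.\<close>
datatype loc =
    W1 nat                          \<comment> \<open>p0/p1, Phase 1: write own id into R1[j]\<close>
  | Flip nat                        \<comment> \<open>p0: flip a fair coin for round j\<close>
  | WC nat int                      \<comment> \<open>p0: write coin outcome c into C1[j]\<close>
  | RdR2 nat                        \<comment> \<open>p0/p1, Phase 2: read R2[j]\<close>
  | Rd1 nat                         \<comment> \<open>p_i, i>=2: first read of R1[j]\<close>
  | Rd2 nat "int option"            \<comment> \<open>second read of R1[j] (u1 known)\<close>
  | RdC nat "int option" "int option" \<comment> \<open>read C1[j] (u1,u2 known), then test\<close>
  | WrR2 nat                        \<comment> \<open>Phase 2: write TRUE into R2[j]\<close>
  | Done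

fun round_of :: "loc \<Rightarrow> nat option" where
  "round_of (W1 j) = Some j"
| "round_of (Flip j) = Some j"
| "round_of (WC j c) = Some j"
| "round_of (RdR2 j) = Some j"
| "round_of (Rd1 j) = Some j"
| "round_of (Rd2 j u) = Some j"
| "round_of (RdC j u v) = Some j"
| "round_of (WrR2 j) = Some j"
| "round_of Done = None"

text \<open>Global configuration: shared registers and program locations.
  R1 values: None = bottom, Some i = value i.\<close>
record config =
  R1 :: "nat \<Rightarrow> int option"
  C1 :: "nat \<Rightarrow> int"
  R2 :: "nat \<Rightarrow> bool"
  pc :: "nat \<Rightarrow> loc"

definition init :: config where
  "init = \<lparr> R1 = (\<lambda>_. None), C1 = (\<lambda>_. -1), R2 = (\<lambda>_. False),
           pc = (\<lambda>p. if p < 2 then W1 0 else Rd1 0) \<rparr>"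

definition step :: "nat \<Rightarrow> nat \<Rightarrow> config \<Rightarrow> config \<Rightarrow> bool" where
  "step n p s s' \<longleftrightarrow> p < n \<and>
    (case pc s p of
       W1 j \<Rightarrow> s' = s\<lparr> R1 := (R1 s)(j := Some (int p)),
                       pc := (pc s)(p := (if p = 0 then Flip j else RdR2 j)) \<rparr>
     | Flip j \<Rightarrow> (\<exists>c\<in>{0,1}. s' = s\<lparr> pc := (pc s)(p := WC j c) \<rparr>)
     | WC j c \<Rightarrow> s' = s\<lparr> C1 := (C1 s)(j := c), pc := (pc s)(p := RdR2 j) \<rparr>
     | RdR2 j \<Rightarrow> s' = s\<lparr> pc := (pc s)(p := (if R2 s j = False then Done else W1 (Suc j))) \<rparr>
     | Rd1 j \<Rightarrow> s' = s\<lparr> pc := (pc s)(p := Rd2 j (R1 s j)) \<rparr>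
     | Rd2 j u1 \<Rightarrow> s' = s\<lparr> pc := (pc s)(p := RdC j u1 (R1 s j)) \<rparr>
     | RdC j u1 u2 \<Rightarrow>
         (let c1 = C1 s j in
          s' = s\<lparr> pc := (pc s)(p := (if u1 \<noteq> Some c1 \<or> u2 \<noteq> Some (1 - c1)
                                       then Done else WrR2 j)) \<rparr>)
     | WrR2 j \<Rightarrow> s' = s\<lparr> R2 := (R2 s)(j := True), pc := (pc s)(p := Rd1 (Suc j)) \<rparr>
     | Done \<Rightarrow> False)"

text \<open>Stuttering steps are
  allowed so that finite executions (and crashed/never-scheduled processes)
  are represented as well.\<close>
definition execution :: "nat \<Rightarrow> (nat \<Rightarrow> config) \<Rightarrow> bool" where
  "execution n s \<longleftrightarrow> s 0 = init \<and>
     (\<forall>k. s (Suc k) = s k \<or> (\<exists>p. step n p (s k) (s (Suc k))))"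

end

theory Submission
  imports Defs
begin

definition okloc :: "nat \<Rightarrow> loc \<Rightarrow> bool" where
  "okloc j l \<longleftrightarrow> l = Done \<or> (\<exists>m\<le>j. l = W1 m \<or> l = Flip m \<or> (\<exists>c. l = WC m c) \<or> l = RdR2 m)"

definition inv :: "nat \<Rightarrow> config \<Rightarrow> bool" where
  "inv j s \<longleftrightarrow> R2 s j = False \<and> okloc j (pc s 0) \<and> okloc j (pc s 1)"

lemma inv_step:
  assumes "inv j s" "step n q s s'" "pc s q \<noteq> WrR2 j"
  shows "inv j s'"
proof -
  have q: "q < n" using assms(2) by (simp add: step_def)
  show ?thesis
  proof (cases "pc s q")
    case (RdR2 m)
    then show ?thesis using assms
      by (cases "m = j") (auto simp: step_def inv_def okloc_def split: if_splits)
  next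
    case (W1 m)
    then show ?thesis using assms
      by (auto simp: step_def inv_def okloc_def split: if_splits)
  next
    case (Flip m)
    then show ?thesis using assms
      by (auto simp: step_def inv_def okloc_def split: if_splits)
  next
    case (WC m c)
    then show ?thesis using assms
      by (auto simp: step_def inv_def okloc_def split: if_splits)
  next
    case (Rd1 m)
    moreover have "q \<noteq> 0 \<and> q \<noteq> 1" using assms(1) calculation unfolding inv_def okloc_def by (metis loc.distinct)
    ultimately show ?thesis using assms
      by (auto simp: step_def inv_def okloc_def split: if_splits)
  next
    case (Rd2 m u)
    moreover have "q \<noteq> 0 \<and> q \<noteq> 1" using assms(1) calculation unfolding inv_def okloc_def by (metis loc.distinct)
    ultimately show ?thesis using assms
      by (auto simp: step_def inv_def okloc_def split: if_splits)
  next
    case (RdC m u v)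
    moreover have "q \<noteq> 0 \<and> q \<noteq> 1" using assms(1) calculation unfolding inv_def okloc_def by (metis loc.distinct)
    ultimately show ?thesis using assms
      by (auto simp: step_def inv_def okloc_def Let_def split: if_splits)
  next
    case (WrR2 m)
    moreover have "q \<noteq> 0 \<and> q \<noteq> 1" using assms(1) calculation unfolding inv_def okloc_def by (metis loc.distinct)
    ultimately show ?thesis using assms
      by (auto simp: step_def inv_def okloc_def split: if_splits)
  next
    case Done
    then show ?thesis using assms by (simp add: step_def)
  qed
qed

theorem lemma1:
  fixes n :: nat and s :: "nat \<Rightarrow> config" and j :: nat
  assumes "n \<ge> 3"
    and "execution n s"
    and "\<forall>k p. p < n \<longrightarrow> pc (s k) p \<noteq> WrR2 j"
  shows "\<forall>k. \<forall>p \<in> {0, 1}. round_of (pc (s k) p) \<noteq> Some (Suc j)"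
proof -
  have I: "inv j (s k)" for k
  proof (induction k)
    case 0
    then show ?case using assms(2)
      by (simp add: execution_def init_def inv_def okloc_def)
  next
    case (Suc k)
    from assms(2) have "s (Suc k) = s k \<or> (\<exists>p. step n p (s k) (s (Suc k)))"
      by (simp add: execution_def)
    then show ?case
    proof
      assume "s (Suc k) = s k" then show ?thesis using Suc by simp
    next
      assume "\<exists>p. step n p (s k) (s (Suc k))"
      then obtain p where st: "step n p (s k) (s (Suc k))" by blast
      then have "p < n" by (simp add: step_def)
      then show ?thesis using inv_step[OF Suc st] assms(3) by blast
    qed
  qed
  show ?thesis
  proof (intro allI ballI)
    fix k p :: nat assume "p \<in> {0,1}"
    then have "okloc j (pc (s k) p)" using I[of k] by (auto simp: inv_def)
    then show "round_of (pc (s k) p) \<noteq> Some (Suc j)" by (auto simp: okloc_def)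
  qed
qed

end
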